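(* If $A \subseteq \mathbb{N}$ is Turing incomputable (i.e. its characteristic sequence is not computable), then $\sigma_A : \mathbb{N} \to \mathbb{N}$ is a permutation of $\mathbb{N}$. In particular, if $A$ is bi-immune, then $\sigma_A$ is a permutation.
   Context: $\mathbb{N}$ denotes the non-negative integers. For $i \in \mathbb{N}$, $\sigma_{(i)}$ is the permutation of $\mathbb{N}$ swapping $i$ and $i+1$ and fixing all other numbers. For $A \subseteq \mathbb{N}$ with increasing enumeration $a_0 < a_1 < \cdots$, define $\sigma_A : \mathbb{N} \to \mathbb{N}$ by $\sigma_A(x) = \lim_{n \to \infty} (\sigma_{(a_0)} \circ \sigma_{(a_1)} \circ \cdots \circ \sigma_{(a_n)})(x)$ (the sequence is eventually constant for each $x$); if $A$ is finite, $\sigma_A$ is the finite composition, and $\sigma_\emptyset$ is the identity. Here $g \circ f$ means apply $f$ first. A set $A$ is immune if it is infinite and contains no infinite computably enumerable subset; $A$ is bi-immune if both $A$ and $\mathbb{N} - A$ are immune. *)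

theory Defs
  imports Main "HOL-Combinatorics.Transposition"
begin

definition sig :: "nat \<Rightarrow> nat \<Rightarrow> nat" where
  "sig i = transpose i (Suc i)"

text \<open>prefix n A = the composition sigma_(a0) o sigma_(a1) o ... o sigma_(ak),
  where a0 < a1 < ... < ak enumerate the elements of A below n
  (the identity if there are none).\<close>
primrec prefix :: "nat set \<Rightarrow> nat \<Rightarrow> nat \<Rightarrow> nat" where
  "prefix A 0 = id"
| "prefix A (Suc n) = (if n \<in> A then prefix A n \<circ> sig n else prefix A n)"

definition sigma :: "nat set \<Rightarrow> nat \<Rightarrow> nat" where
  "sigma A x = (THE y. \<forall>\<^sub>F n in sequentially. prefix A n x = y)"

primrec prim_rec :: "(nat list \<Rightarrow> nat) \<Rightarrow> (nat list \<Rightarrow> nat) \<Rightarrow> nat \<Rightarrow> nat list \<Rightarrow> nat" where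
  "prim_rec f g 0 xs = f xs"
| "prim_rec f g (Suc y) xs = g (y # prim_rec f g y xs # xs)"

text \<open>recursive n f: f, viewed as an n-ary function on argument lists of length n,
  is a (total) general recursive function (Kleene).\<close>
inductive recursive :: "nat \<Rightarrow> (nat list \<Rightarrow> nat) \<Rightarrow> bool" where
  zero: "recursive n (\<lambda>xs. 0)"
| succ: "recursive 1 (\<lambda>xs. Suc (xs ! 0))"
| proj: "i < n \<Longrightarrow> recursive n (\<lambda>xs. xs ! i)"
| comp: "\<lbrakk>recursive m f; length gs = m; \<forall>g\<in>set gs. recursive n g\<rbrakk>
         \<Longrightarrow> recursive n (\<lambda>xs. f (map (\<lambda>g. g xs) gs))"
| primr: "\<lbrakk>recursive n f; recursive (Suc (Suc n)) g\<rbrakk>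
         \<Longrightarrow> recursive (Suc n) (\<lambda>xs. prim_rec f g (hd xs) (tl xs))"
| mu: "\<lbrakk>recursive (Suc n) f; \<forall>xs. length xs = n \<longrightarrow> (\<exists>y. f (y # xs) = 0)\<rbrakk>
         \<Longrightarrow> recursive n (\<lambda>xs. LEAST y. f (y # xs) = 0)"
| ext: "\<lbrakk>recursive n f; \<forall>xs. length xs = n \<longrightarrow> g xs = f xs\<rbrakk> \<Longrightarrow> recursive n g"

definition computable_set :: "nat set \<Rightarrow> bool" where
  "computable_set A \<longleftrightarrow> recursive 1 (\<lambda>xs. if xs ! 0 \<in> A then 1 else 0)"

text \<open>Computably enumerable = Sigma^0_1: projection of a decidable binary relation.\<close>
definition ce_set :: "nat set \<Rightarrow> bool" where
  "ce_set W \<longleftrightarrow> (\<exists>f. recursive 2 f \<and> W = {x. \<exists>y. f [x, y] = 0})"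

definition immune :: "nat set \<Rightarrow> bool" where
  "immune A \<longleftrightarrow> infinite A \<and> \<not> (\<exists>W. ce_set W \<and> infinite W \<and> W \<subseteq> A)"

definition bi_immune :: "nat set \<Rightarrow> bool" where
  "bi_immune A \<longleftrightarrow> immune A \<and> immune (UNIV - A)"

end

theory Submission
  imports Defs "HOL-Library.Infinite_Set"
begin

lemma sig_fix: "k \<noteq> i \<Longrightarrow> k \<noteq> Suc i \<Longrightarrow> sig i k = k"
  by (simp add: sig_def)

lemma prefix_stable: "m \<ge> Suc x \<Longrightarrow> prefix A m x = prefix A (Suc x) x"
proof (induction m)
  case 0 then show ?case by simp
next
  case (Suc m)
  show ?case
  proof (cases "m = x")
    case True then show ?thesis by simp
  next
    case False
    with Suc.prems have "m \<ge> Suc x" by simp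
    with Suc.IH have ih: "prefix A m x = prefix A (Suc x) x" by simp
    have "sig m x = x" using \<open>m \<ge> Suc x\<close> by (intro sig_fix) auto
    then show ?thesis using ih by simp
  qed
qed

lemma sigma_eq: "sigma A x = prefix A (Suc x) x"
  unfolding sigma_def
proof (rule the_equality)
  show "\<forall>\<^sub>F n in sequentially. prefix A n x = prefix A (Suc x) x"
    unfolding eventually_sequentially using prefix_stable by blast
next
  fix y assume "\<forall>\<^sub>F n in sequentially. prefix A n x = y"
  then obtain N where N: "\<And>n. n \<ge> N \<Longrightarrow> prefix A n x = y"
    unfolding eventually_sequentially by blast
  have "prefix A (max N (Suc x)) x = y" using N by simp
  moreover have "prefix A (max N (Suc x)) x = prefix A (Suc x) x"
    by (rule prefix_stable) simp
  ultimately show "y = prefix A (Suc x) x" by simp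
qed

lemma bij_prefix: "bij (prefix A n)"
proof (induction n)
  case 0 then show ?case by (simp only: prefix.simps bij_id)
next
  case (Suc n)
  have "bij (sig n)" unfolding sig_def by (rule bij_transpose)
  then show ?case using Suc.IH by (auto intro: bij_comp)
qed

lemma prefix_fix: "k > n \<Longrightarrow> prefix A n k = k"
proof (induction n)
  case 0 then show ?case by simp
next
  case (Suc n)
  have "sig n k = k" using Suc.prems by (intro sig_fix) auto
  then show ?case using Suc by simp
qed

lemma sigma_bij:
  assumes "infinite (UNIV - A)"
  shows "bij (sigma A)"
proof (rule bijI)
  show "inj (sigma A)"
  proof (rule injI)
    fix x y assume e: "sigma A x = sigma A y"
    define m where "m = Suc (max x y)"
    have 1: "prefix A m x = prefix A (Suc x) x" by (rule prefix_stable) (simp add: m_def)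
    have 2: "prefix A m y = prefix A (Suc y) y" by (rule prefix_stable) (simp add: m_def)
    have "prefix A m x = prefix A m y" unfolding 1 2 using e by (simp only: sigma_eq)
    moreover have "inj (prefix A m)" using bij_prefix bij_is_inj by blast
    ultimately show "x = y" by (rule injD[rotated])
  qed
next
  have "\<exists>x. sigma A x = y" for y
  proof -
    obtain n where n: "n \<notin> A" "n \<ge> y"
      using assms unfolding infinite_nat_iff_unbounded_le by blast
    let ?p = "prefix A n"
    have b: "bij ?p" by (rule bij_prefix)
    obtain x where px: "?p x = y" using b unfolding bij_def surj_def by metis
    have "x \<le> n"
    proof (rule ccontr)
      assume "\<not> x \<le> n"
      then have "?p x = x" by (intro prefix_fix) simp
      with px \<open>\<not> x \<le> n\<close> n(2) show False by linarith
    qed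
    have "sigma A x = prefix A (Suc n) x"
      using prefix_stable[of x "Suc n" A] \<open>x \<le> n\<close> by (simp add: sigma_eq)
    also have "\<dots> = y" using n(1) px by simp
    finally show "\<exists>x. sigma A x = y" by blast
  qed
  then show "surj (sigma A)" unfolding surj_def by (metis)
qed

lemma const_rec: "recursive n (\<lambda>xs. c)"
proof (induction c)
  case 0 then show ?case by (rule recursive.zero)
next
  case (Suc c)
  have "recursive n (\<lambda>xs. (\<lambda>ys. Suc (ys ! 0)) (map (\<lambda>g. g xs) [\<lambda>xs. c]))"
    by (rule recursive.comp[OF recursive.succ]) (use Suc in auto)
  then show ?case by simp
qed

lemma eventually_const_rec:
  "(\<forall>x\<ge>N. h x = h N) \<Longrightarrow> recursive (Suc 0) (\<lambda>xs. h (xs ! 0))"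
proof (induction N arbitrary: h)
  case 0
  have c: "recursive (Suc 0) (\<lambda>xs. h 0)" by (rule const_rec)
  have eq: "\<forall>xs. length xs = Suc 0 \<longrightarrow> h (xs ! 0) = h 0" using "0.prems" by (metis le0)
  show ?case by (rule recursive.ext[OF c eq])
next
  case (Suc N)
  have "\<forall>x\<ge>N. (h \<circ> Suc) x = (h \<circ> Suc) N"
  proof (intro allI impI)
    fix x assume "N \<le> x"
    then have "Suc N \<le> Suc x" by simp
    then have "h (Suc x) = h (Suc N)" using Suc.prems by blast
    then show "(h \<circ> Suc) x = (h \<circ> Suc) N" by (simp only: o_apply)
  qed
  then have r1: "recursive (Suc 0) (\<lambda>xs. (h \<circ> Suc) (xs ! 0))" by (rule Suc.IH)
  have pr: "recursive (Suc (Suc 0)) (\<lambda>xs. xs ! 0)" by (rule recursive.proj) simp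
  have "recursive (Suc (Suc 0)) (\<lambda>xs. (\<lambda>ys. (h \<circ> Suc) (ys ! 0)) (map (\<lambda>g. g xs) [\<lambda>xs. xs ! 0]))"
    by (rule recursive.comp[OF r1]) (simp_all add: pr)
  then have r2: "recursive (Suc (Suc 0)) (\<lambda>xs. (h \<circ> Suc) (xs ! 0))" by simp
  have r0: "recursive 0 (\<lambda>xs. h 0)" by (rule const_rec)
  have r3: "recursive (Suc 0) (\<lambda>xs. prim_rec (\<lambda>xs. h 0) (\<lambda>xs. (h \<circ> Suc) (xs ! 0)) (hd xs) (tl xs))"
    by (rule recursive.primr[OF r0 r2])
  have e: "\<forall>xs. length xs = Suc 0 \<longrightarrow> h (xs ! 0) =
      prim_rec (\<lambda>xs. h 0) (\<lambda>xs. (h \<circ> Suc) (xs ! 0)) (hd xs) (tl xs)"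
  proof (intro allI impI)
    fix xs :: "nat list" assume "length xs = Suc 0"
    then obtain a where xs: "xs = [a]" by (cases xs) auto
    show "h (xs ! 0) = prim_rec (\<lambda>xs. h 0) (\<lambda>xs. (h \<circ> Suc) (xs ! 0)) (hd xs) (tl xs)"
      unfolding xs by (cases a) simp_all
  qed
  show ?case by (rule recursive.ext[OF r3 e])
qed


lemma cofinite_computable:
  assumes "finite (UNIV - A)"
  shows "computable_set A"
proof -
  obtain N where N: "\<forall>x\<ge>N. x \<in> A"
  proof -
    obtain M where "UNIV - A \<subseteq> {..<M}" using assms finite_nat_iff_bounded by blast
    then have "\<forall>x\<ge>M. x \<in> A" by auto
    then show ?thesis using that by blast
  qed
  define h where "h = (\<lambda>x. if x \<in> A then 1 else (0::nat))"
  have "\<forall>x\<ge>N. h x = h N"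
  proof (intro allI impI)
    fix x assume "N \<le> x"
    then have "x \<in> A" "N \<in> A" using N by auto
    then show "h x = h N" unfolding h_def by simp
  qed
  then have "recursive (Suc 0) (\<lambda>xs. h (xs ! 0))" by (rule eventually_const_rec)
  then show ?thesis unfolding computable_set_def h_def One_nat_def .
qed

theorem mainTheorem3:
  fixes A :: "nat set"
  shows "(\<not> computable_set A \<longrightarrow> bij (sigma A)) \<and> (bi_immune A \<longrightarrow> bij (sigma A))"
proof (intro conjI impI)
  assume "\<not> computable_set A"
  then have "infinite (UNIV - A)" using cofinite_computable by blast
  then show "bij (sigma A)" by (rule sigma_bij)
next
  assume "bi_immune A"
  then have "infinite (UNIV - A)" unfolding bi_immune_def immune_def by simp
  then show "bij (sigma A)" by (rule sigma_bij)
qed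

end
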